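(* Let $S$ be a finite set and $\mathcal{C}\subseteq 2^S$, and let $A_{\mathcal{C}}=\{2^X\mid X\in\mathcal{D}\}$, where $\mathcal{D}=\{Y\subseteq S\mid\exists X\in\mathcal{C},\ Y\subseteq X\}$ is the downset generated by $\mathcal{C}$ and $2^X=\{Y\subseteq S\mid Y\subseteq X\}$. Then $\mathcal{C}\in\bullet(A_{\mathcal{C}})$.
   Context: For sets $A,B$, the disjoint union $A\,\dot\cup\,B=A\cup B$ is defined only when $A\cap B=\emptyset$, and the subset complement $A\,\dot\setminus\,B=A\setminus B$ is defined only when $B\subseteq A$. For a finite family $\mathcal{G}$ of sets, $\bullet(\mathcal{G})$ is the smallest family of sets containing $\emptyset$ and every member of $\mathcal{G}$ and closed under all well-defined disjoint unions and subset complements. Here members of $\mathcal{G}$ are subsets of $2^S$. *)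

theory Defs
  imports Main
begin

inductive_set bullet :: "'b set set \<Rightarrow> 'b set set" for G :: "'b set set" where
  bullet_empty: "{} \<in> bullet G"
| bullet_gen: "A \<in> G \<Longrightarrow> A \<in> bullet G"
| bullet_dunion: "A \<in> bullet G \<Longrightarrow> B \<in> bullet G \<Longrightarrow> A \<inter> B = {} \<Longrightarrow> A \<union> B \<in> bullet G"
| bullet_sdiff: "A \<in> bullet G \<Longrightarrow> B \<in> bullet G \<Longrightarrow> B \<subseteq> A \<Longrightarrow> A - B \<in> bullet G"

definition powS :: "'a set \<Rightarrow> 'a set \<Rightarrow> 'a set set" where
  "powS S X = {Y. Y \<subseteq> S \<and> Y \<subseteq> X}"

definition downset :: "'a set \<Rightarrow> 'a set set \<Rightarrow> 'a set set" where
  "downset S C = {Y. Y \<subseteq> S \<and> (\<exists>X\<in>C. Y \<subseteq> X)}"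

definition A_fam :: "'a set \<Rightarrow> 'a set set \<Rightarrow> 'a set set set" where
  "A_fam S C = {powS S X | X. X \<in> downset S C}"

end

theory Submission
  imports Defs
begin

lemma fin_union_bullet:
  assumes "finite F" "\<forall>Y\<in>F. {Y} \<in> bullet G"
  shows "F \<in> bullet G"
  using assms
proof (induction F rule: finite_induct)
  case empty
  show ?case by (rule bullet.bullet_empty)
next
  case (insert x F)
  have "{x} \<union> F \<in> bullet G"
    by (rule bullet_dunion) (use insert in auto)
  then show ?case by simp
qed

lemma singleton_bullet:
  assumes "finite S" "X \<in> downset S C"
  shows "{X} \<in> bullet (A_fam S C)"
  using assms(2)
proof (induction "card X" arbitrary: X rule: less_induct)
  case less
  have XS: "X \<subseteq> S" using less.prems unfolding downset_def by auto
  have fX: "finite X" using XS assms(1) by (rule finite_subset)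
  have P: "powS S X = Pow X" using XS unfolding powS_def by auto
  have Pin: "Pow X \<in> bullet (A_fam S C)"
  proof -
    have "powS S X \<in> A_fam S C" using less.prems unfolding A_fam_def by blast
    then show ?thesis using P bullet_gen by metis
  qed
  have "\<forall>Y\<in>Pow X - {X}. {Y} \<in> bullet (A_fam S C)"
  proof
    fix Y assume Y: "Y \<in> Pow X - {X}"
    then have "Y \<subset> X" by auto
    then have "card Y < card X" using fX by (simp add: psubset_card_mono)
    moreover have "Y \<in> downset S C" using less.prems Y unfolding downset_def by auto
    ultimately show "{Y} \<in> bullet (A_fam S C)" using less.hyps[of Y] by simp
  qed
  then have Q: "Pow X - {X} \<in> bullet (A_fam S C)"
    using fin_union_bullet[of "Pow X - {X}"] fX by simp
  have "Pow X - (Pow X - {X}) \<in> bullet (A_fam S C)"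
    by (rule bullet_sdiff[OF Pin Q]) auto
  moreover have "Pow X - (Pow X - {X}) = {X}" by auto
  ultimately show ?case by simp
qed

theorem lemma5p7:
  fixes S :: "'a set" and C :: "'a set set"
  assumes "finite S" and "C \<subseteq> Pow S"
  shows "C \<in> bullet (A_fam S C)"
proof (rule fin_union_bullet)
  show "finite C" using assms by (meson finite_Pow_iff finite_subset)
  show "\<forall>Y\<in>C. {Y} \<in> bullet (A_fam S C)"
  proof
    fix Y assume "Y \<in> C"
    then have "Y \<in> downset S C" using assms(2) unfolding downset_def by auto
    then show "{Y} \<in> bullet (A_fam S C)" using singleton_bullet[OF assms(1)] by simp
  qed
qed

end
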